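(* Let $L$ be a lattice that has no doubly reducible elements, and let $a_1,a_2,a_3,b_1,b_2,b_3$ be six distinct elements of $L$ such that $a_1<a_2<a_3$, $b_1<b_2<b_3$, $a_1<b_3$ and $b_1<a_3$. Assume moreover that $a_2\parallel b_i$ for all $1\le i\le 3$, that $a_i\parallel b_2$ for all $1\le i\le 3$, that $a_2\vee b_2=a_3\vee b_3$, and that $a_2\wedge b_2=a_1\wedge b_1$. Then $L$ has a sublattice isomorphic to $L_{15}$.
   Context: For elements $x,y$ of a poset, $x\parallel y$ means that neither $x\le y$ nor $y\le x$. An element $x$ of a lattice $L$ is doubly reducible if there exist $x_1,x_2,x_3,x_4\in L$ with $x_1\parallel x_2$, $x_3\parallel x_4$, and $x=x_1\vee x_2=x_3\wedge x_4$. The lattice $L_{15}$ is the ten-element lattice with elements $0,u,v,p,q,s,t,1,g,h$ whose Hasse diagram has exactly the covering relations $0\prec u$, $0\prec v$, $u\prec p$, $v\prec p$, $p\prec q$, $q\prec s$, $q\prec t$, $s\prec 1$, $t\prec 1$, $u\prec g$, $g\prec s$, $v\prec h$, $h\prec t$ (so $p=u\vee v$, $q=s\wedge t$, and $g$ lies strictly between $u$ and $s$, $h$ strictly between $v$ and $t$). *)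

theory Defs
  imports Main
begin

definition incomparable :: "'a::order \<Rightarrow> 'a \<Rightarrow> bool" (infix "\<parallel>" 50) where
  "x \<parallel> y \<longleftrightarrow> \<not> x \<le> y \<and> \<not> y \<le> x"

definition doubly_reducible :: "'a::lattice \<Rightarrow> bool" where
  "doubly_reducible x \<longleftrightarrow>
     (\<exists>x1 x2 x3 x4. x1 \<parallel> x2 \<and> x3 \<parallel> x4 \<and> x = sup x1 x2 \<and> x = inf x3 x4)"

datatype l15 = Z | U | V | P | Q | S | T | One | G | H

definition cov15 :: "l15 \<Rightarrow> l15 \<Rightarrow> bool" where
  "cov15 x y \<longleftrightarrow> (x, y) \<in> {(Z,U), (Z,V), (U,P), (V,P), (P,Q), (Q,S), (Q,T),
                              (S,One), (T,One), (U,G), (G,S), (V,H), (H,T)}"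

definition le15 :: "l15 \<Rightarrow> l15 \<Rightarrow> bool" where
  "le15 = cov15\<^sup>*\<^sup>*"

text \<open>L has a sublattice isomorphic to L15: there is a map f from L15 into L
  that is an order embedding (hence injective and an order isomorphism onto its
  image) whose image is closed under joins and meets of L, i.e. is a sublattice.\<close>
definition has_sublattice_L15 :: "'a::lattice itself \<Rightarrow> bool" where
  "has_sublattice_L15 _ \<longleftrightarrow>
     (\<exists>f :: l15 \<Rightarrow> 'a.
        (\<forall>x y. f x \<le> f y \<longleftrightarrow> le15 x y) \<and>
        (\<forall>x y. sup (f x) (f y) \<in> range f \<and> inf (f x) (f y) \<in> range f))"

end

theory Submission imports Defs begin
definition le15t :: "l15 \<Rightarrow> l15 \<Rightarrow> bool" where
  "le15t x y \<longleftrightarrow> (x, y) \<in> set [(Z,Z), (Z,U), (Z,V), (Z,P), (Z,Q), (Z,S), (Z,T), (Z,One), (Z,G), (Z,H), (U,U), (U,P), (U,Q), (U,S), (U,T), (U,One), (U,G), (V,V), (V,P), (V,Q), (V,S), (V,T), (V,One), (V,H), (P,P), (P,Q), (P,S), (P,T), (P,One), (Q,Q), (Q,S), (Q,T), (Q,One), (S,S), (S,One), (T,T), (T,One), (One,One), (G,S), (G,One), (G,G), (H,T), (H,One), (H,H)]"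

lemma le15_eq: "le15 = le15t"
proof (intro ext iffI)
  fix x y assume "le15 x y"
  then show "le15t x y" unfolding le15_def
  proof (induction rule: rtranclp_induct)
    case base then show ?case by (cases x) (simp_all add: le15t_def)
  next
    case (step y z) then show ?case
      by (cases x; cases y; cases z) (simp_all add: le15t_def cov15_def)
  qed
next
  fix x y assume "le15t x y"
  have c: "cov15 a b \<Longrightarrow> le15 a b" for a b unfolding le15_def by simp
  have tr: "le15 a b \<Longrightarrow> le15 b c \<Longrightarrow> le15 a c" for a b c unfolding le15_def by simp
  have cs: "cov15 Z U" "cov15 Z V" "cov15 U P" "cov15 V P" "cov15 P Q" "cov15 Q S" "cov15 Q T" "cov15 S One" "cov15 T One" "cov15 U G" "cov15 G S" "cov15 V H" "cov15 H T" by (simp_all add: cov15_def)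
  have rf: "le15 a a" for a unfolding le15_def by simp
  show "le15 x y" using \<open>le15t x y\<close> by (cases x; cases y; simp add: le15t_def; (meson c tr cs rf)?)
qed

lemma L15_crit:
  fixes f :: "l15 \<Rightarrow> 'a::lattice"
  assumes cv: "f Z \<le> f U" "f Z \<le> f V" "f U \<le> f P" "f V \<le> f P" "f P \<le> f Q" "f Q \<le> f S" "f Q \<le> f T" "f S \<le> f One" "f T \<le> f One" "f U \<le> f G" "f G \<le> f S" "f V \<le> f H" "f H \<le> f T"
    and ng: "\<not> f U \<le> f H" "\<not> f V \<le> f G" "\<not> f G \<le> f H" "\<not> f G \<le> f T" "\<not> f G \<le> f P" "\<not> f H \<le> f G" "\<not> f H \<le> f S" "\<not> f H \<le> f P" "\<not> f Q \<le> f G" "\<not> f Q \<le> f H" "\<not> f Q \<le> f P"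
    and sp: "sup (f U) (f V) = f P" "sup (f U) (f H) = f T" "sup (f V) (f G) = f S" "sup (f G) (f H) = f One" "sup (f G) (f P) = f S" "sup (f G) (f Q) = f S" "sup (f G) (f T) = f One" "sup (f H) (f P) = f T" "sup (f H) (f Q) = f T" "sup (f H) (f S) = f One" "sup (f S) (f T) = f One"
    and inf: "inf (f U) (f V) = f Z" "inf (f U) (f H) = f Z" "inf (f V) (f G) = f Z" "inf (f G) (f H) = f Z" "inf (f G) (f P) = f U" "inf (f G) (f Q) = f U" "inf (f G) (f T) = f U" "inf (f H) (f P) = f V" "inf (f H) (f Q) = f V" "inf (f H) (f S) = f V" "inf (f S) (f T) = f Q"
  shows "has_sublattice_L15 TYPE('a)"
proof -
  have le_Z_Z: "f Z \<le> f Z" by simp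
  have le_Z_U: "f Z \<le> f U" by (rule cv(1))
  have le_Z_V: "f Z \<le> f V" by (rule cv(2))
  have le_Z_P: "f Z \<le> f P" by (rule order_trans[OF cv(1) cv(3)])
  have le_Z_Q: "f Z \<le> f Q" by (rule order_trans[OF cv(1) order_trans[OF cv(3) cv(5)]])
  have le_Z_S: "f Z \<le> f S" by (rule order_trans[OF cv(1) order_trans[OF cv(10) cv(11)]])
  have le_Z_T: "f Z \<le> f T" by (rule order_trans[OF cv(2) order_trans[OF cv(12) cv(13)]])
  have le_Z_One: "f Z \<le> f One" by (rule order_trans[OF cv(1) order_trans[OF cv(10) order_trans[OF cv(11) cv(8)]]])
  have le_Z_G: "f Z \<le> f G" by (rule order_trans[OF cv(1) cv(10)])
  have le_Z_H: "f Z \<le> f H" by (rule order_trans[OF cv(2) cv(12)])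
  have le_U_U: "f U \<le> f U" by simp
  have le_U_P: "f U \<le> f P" by (rule cv(3))
  have le_U_Q: "f U \<le> f Q" by (rule order_trans[OF cv(3) cv(5)])
  have le_U_S: "f U \<le> f S" by (rule order_trans[OF cv(10) cv(11)])
  have le_U_T: "f U \<le> f T" by (rule order_trans[OF cv(3) order_trans[OF cv(5) cv(7)]])
  have le_U_One: "f U \<le> f One" by (rule order_trans[OF cv(10) order_trans[OF cv(11) cv(8)]])
  have le_U_G: "f U \<le> f G" by (rule cv(10))
  have le_V_V: "f V \<le> f V" by simp
  have le_V_P: "f V \<le> f P" by (rule cv(4))
  have le_V_Q: "f V \<le> f Q" by (rule order_trans[OF cv(4) cv(5)])
  have le_V_S: "f V \<le> f S" by (rule order_trans[OF cv(4) order_trans[OF cv(5) cv(6)]])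
  have le_V_T: "f V \<le> f T" by (rule order_trans[OF cv(12) cv(13)])
  have le_V_One: "f V \<le> f One" by (rule order_trans[OF cv(12) order_trans[OF cv(13) cv(9)]])
  have le_V_H: "f V \<le> f H" by (rule cv(12))
  have le_P_P: "f P \<le> f P" by simp
  have le_P_Q: "f P \<le> f Q" by (rule cv(5))
  have le_P_S: "f P \<le> f S" by (rule order_trans[OF cv(5) cv(6)])
  have le_P_T: "f P \<le> f T" by (rule order_trans[OF cv(5) cv(7)])
  have le_P_One: "f P \<le> f One" by (rule order_trans[OF cv(5) order_trans[OF cv(6) cv(8)]])
  have le_Q_Q: "f Q \<le> f Q" by simp
  have le_Q_S: "f Q \<le> f S" by (rule cv(6))
  have le_Q_T: "f Q \<le> f T" by (rule cv(7))
  have le_Q_One: "f Q \<le> f One" by (rule order_trans[OF cv(6) cv(8)])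
  have le_S_S: "f S \<le> f S" by simp
  have le_S_One: "f S \<le> f One" by (rule cv(8))
  have le_T_T: "f T \<le> f T" by simp
  have le_T_One: "f T \<le> f One" by (rule cv(9))
  have le_One_One: "f One \<le> f One" by simp
  have le_G_S: "f G \<le> f S" by (rule cv(11))
  have le_G_One: "f G \<le> f One" by (rule order_trans[OF cv(11) cv(8)])
  have le_G_G: "f G \<le> f G" by simp
  have le_H_T: "f H \<le> f T" by (rule cv(13))
  have le_H_One: "f H \<le> f One" by (rule order_trans[OF cv(13) cv(9)])
  have le_H_H: "f H \<le> f H" by simp
  have nle_U_Z: "\<not> f U \<le> f Z" using ng(1) le_U_U le_Z_H order_trans by metis
  have nle_U_V: "\<not> f U \<le> f V" using ng(1) le_U_U le_V_H order_trans by metis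
  have nle_U_H: "\<not> f U \<le> f H" using ng(1) le_U_U le_H_H order_trans by metis
  have nle_V_Z: "\<not> f V \<le> f Z" using ng(2) le_V_V le_Z_G order_trans by metis
  have nle_V_U: "\<not> f V \<le> f U" using ng(2) le_V_V le_U_G order_trans by metis
  have nle_V_G: "\<not> f V \<le> f G" using ng(2) le_V_V le_G_G order_trans by metis
  have nle_P_Z: "\<not> f P \<le> f Z" using ng(1) le_U_P le_Z_H order_trans by metis
  have nle_P_U: "\<not> f P \<le> f U" using ng(2) le_V_P le_U_G order_trans by metis
  have nle_P_V: "\<not> f P \<le> f V" using ng(1) le_U_P le_V_H order_trans by metis
  have nle_P_G: "\<not> f P \<le> f G" using ng(2) le_V_P le_G_G order_trans by metis
  have nle_P_H: "\<not> f P \<le> f H" using ng(1) le_U_P le_H_H order_trans by metis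
  have nle_Q_Z: "\<not> f Q \<le> f Z" using ng(1) le_U_Q le_Z_H order_trans by metis
  have nle_Q_U: "\<not> f Q \<le> f U" using ng(2) le_V_Q le_U_G order_trans by metis
  have nle_Q_V: "\<not> f Q \<le> f V" using ng(1) le_U_Q le_V_H order_trans by metis
  have nle_Q_P: "\<not> f Q \<le> f P" using ng(11) le_Q_Q le_P_P order_trans by metis
  have nle_Q_G: "\<not> f Q \<le> f G" using ng(2) le_V_Q le_G_G order_trans by metis
  have nle_Q_H: "\<not> f Q \<le> f H" using ng(1) le_U_Q le_H_H order_trans by metis
  have nle_S_Z: "\<not> f S \<le> f Z" using ng(1) le_U_S le_Z_H order_trans by metis
  have nle_S_U: "\<not> f S \<le> f U" using ng(2) le_V_S le_U_G order_trans by metis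
  have nle_S_V: "\<not> f S \<le> f V" using ng(1) le_U_S le_V_H order_trans by metis
  have nle_S_P: "\<not> f S \<le> f P" using ng(4) le_G_S le_P_T order_trans by metis
  have nle_S_Q: "\<not> f S \<le> f Q" using ng(4) le_G_S le_Q_T order_trans by metis
  have nle_S_T: "\<not> f S \<le> f T" using ng(4) le_G_S le_T_T order_trans by metis
  have nle_S_G: "\<not> f S \<le> f G" using ng(2) le_V_S le_G_G order_trans by metis
  have nle_S_H: "\<not> f S \<le> f H" using ng(1) le_U_S le_H_H order_trans by metis
  have nle_T_Z: "\<not> f T \<le> f Z" using ng(1) le_U_T le_Z_H order_trans by metis
  have nle_T_U: "\<not> f T \<le> f U" using ng(2) le_V_T le_U_G order_trans by metis
  have nle_T_V: "\<not> f T \<le> f V" using ng(1) le_U_T le_V_H order_trans by metis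
  have nle_T_P: "\<not> f T \<le> f P" using ng(7) le_H_T le_P_S order_trans by metis
  have nle_T_Q: "\<not> f T \<le> f Q" using ng(7) le_H_T le_Q_S order_trans by metis
  have nle_T_S: "\<not> f T \<le> f S" using ng(7) le_H_T le_S_S order_trans by metis
  have nle_T_G: "\<not> f T \<le> f G" using ng(2) le_V_T le_G_G order_trans by metis
  have nle_T_H: "\<not> f T \<le> f H" using ng(1) le_U_T le_H_H order_trans by metis
  have nle_One_Z: "\<not> f One \<le> f Z" using ng(1) le_U_One le_Z_H order_trans by metis
  have nle_One_U: "\<not> f One \<le> f U" using ng(2) le_V_One le_U_G order_trans by metis
  have nle_One_V: "\<not> f One \<le> f V" using ng(1) le_U_One le_V_H order_trans by metis
  have nle_One_P: "\<not> f One \<le> f P" using ng(4) le_G_One le_P_T order_trans by metis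
  have nle_One_Q: "\<not> f One \<le> f Q" using ng(4) le_G_One le_Q_T order_trans by metis
  have nle_One_S: "\<not> f One \<le> f S" using ng(7) le_H_One le_S_S order_trans by metis
  have nle_One_T: "\<not> f One \<le> f T" using ng(4) le_G_One le_T_T order_trans by metis
  have nle_One_G: "\<not> f One \<le> f G" using ng(2) le_V_One le_G_G order_trans by metis
  have nle_One_H: "\<not> f One \<le> f H" using ng(1) le_U_One le_H_H order_trans by metis
  have nle_G_Z: "\<not> f G \<le> f Z" using ng(1) le_U_G le_Z_H order_trans by metis
  have nle_G_U: "\<not> f G \<le> f U" using ng(4) le_G_G le_U_T order_trans by metis
  have nle_G_V: "\<not> f G \<le> f V" using ng(1) le_U_G le_V_H order_trans by metis
  have nle_G_P: "\<not> f G \<le> f P" using ng(4) le_G_G le_P_T order_trans by metis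
  have nle_G_Q: "\<not> f G \<le> f Q" using ng(4) le_G_G le_Q_T order_trans by metis
  have nle_G_T: "\<not> f G \<le> f T" using ng(4) le_G_G le_T_T order_trans by metis
  have nle_G_H: "\<not> f G \<le> f H" using ng(1) le_U_G le_H_H order_trans by metis
  have nle_H_Z: "\<not> f H \<le> f Z" using ng(2) le_V_H le_Z_G order_trans by metis
  have nle_H_U: "\<not> f H \<le> f U" using ng(2) le_V_H le_U_G order_trans by metis
  have nle_H_V: "\<not> f H \<le> f V" using ng(7) le_H_H le_V_S order_trans by metis
  have nle_H_P: "\<not> f H \<le> f P" using ng(7) le_H_H le_P_S order_trans by metis
  have nle_H_Q: "\<not> f H \<le> f Q" using ng(7) le_H_H le_Q_S order_trans by metis
  have nle_H_S: "\<not> f H \<le> f S" using ng(7) le_H_H le_S_S order_trans by metis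
  have nle_H_G: "\<not> f H \<le> f G" using ng(2) le_V_H le_G_G order_trans by metis
  have sup_Z_Z: "sup (f Z) (f Z) = f Z" by (rule sup_absorb2[OF le_Z_Z])
  have sup_Z_U: "sup (f Z) (f U) = f U" by (rule sup_absorb2[OF le_Z_U])
  have sup_Z_V: "sup (f Z) (f V) = f V" by (rule sup_absorb2[OF le_Z_V])
  have sup_Z_P: "sup (f Z) (f P) = f P" by (rule sup_absorb2[OF le_Z_P])
  have sup_Z_Q: "sup (f Z) (f Q) = f Q" by (rule sup_absorb2[OF le_Z_Q])
  have sup_Z_S: "sup (f Z) (f S) = f S" by (rule sup_absorb2[OF le_Z_S])
  have sup_Z_T: "sup (f Z) (f T) = f T" by (rule sup_absorb2[OF le_Z_T])
  have sup_Z_One: "sup (f Z) (f One) = f One" by (rule sup_absorb2[OF le_Z_One])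
  have sup_Z_G: "sup (f Z) (f G) = f G" by (rule sup_absorb2[OF le_Z_G])
  have sup_Z_H: "sup (f Z) (f H) = f H" by (rule sup_absorb2[OF le_Z_H])
  have sup_U_Z: "sup (f U) (f Z) = f U" by (rule sup_absorb1[OF le_Z_U])
  have sup_U_U: "sup (f U) (f U) = f U" by (rule sup_absorb2[OF le_U_U])
  have sup_U_V: "sup (f U) (f V) = f P" by (rule sp(1))
  have sup_U_P: "sup (f U) (f P) = f P" by (rule sup_absorb2[OF le_U_P])
  have sup_U_Q: "sup (f U) (f Q) = f Q" by (rule sup_absorb2[OF le_U_Q])
  have sup_U_S: "sup (f U) (f S) = f S" by (rule sup_absorb2[OF le_U_S])
  have sup_U_T: "sup (f U) (f T) = f T" by (rule sup_absorb2[OF le_U_T])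
  have sup_U_One: "sup (f U) (f One) = f One" by (rule sup_absorb2[OF le_U_One])
  have sup_U_G: "sup (f U) (f G) = f G" by (rule sup_absorb2[OF le_U_G])
  have sup_U_H: "sup (f U) (f H) = f T" by (rule sp(2))
  have sup_V_Z: "sup (f V) (f Z) = f V" by (rule sup_absorb1[OF le_Z_V])
  have sup_V_U: "sup (f V) (f U) = f P" using sp(1) by (simp add: sup.commute)
  have sup_V_V: "sup (f V) (f V) = f V" by (rule sup_absorb2[OF le_V_V])
  have sup_V_P: "sup (f V) (f P) = f P" by (rule sup_absorb2[OF le_V_P])
  have sup_V_Q: "sup (f V) (f Q) = f Q" by (rule sup_absorb2[OF le_V_Q])
  have sup_V_S: "sup (f V) (f S) = f S" by (rule sup_absorb2[OF le_V_S])
  have sup_V_T: "sup (f V) (f T) = f T" by (rule sup_absorb2[OF le_V_T])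
  have sup_V_One: "sup (f V) (f One) = f One" by (rule sup_absorb2[OF le_V_One])
  have sup_V_G: "sup (f V) (f G) = f S" by (rule sp(3))
  have sup_V_H: "sup (f V) (f H) = f H" by (rule sup_absorb2[OF le_V_H])
  have sup_P_Z: "sup (f P) (f Z) = f P" by (rule sup_absorb1[OF le_Z_P])
  have sup_P_U: "sup (f P) (f U) = f P" by (rule sup_absorb1[OF le_U_P])
  have sup_P_V: "sup (f P) (f V) = f P" by (rule sup_absorb1[OF le_V_P])
  have sup_P_P: "sup (f P) (f P) = f P" by (rule sup_absorb2[OF le_P_P])
  have sup_P_Q: "sup (f P) (f Q) = f Q" by (rule sup_absorb2[OF le_P_Q])
  have sup_P_S: "sup (f P) (f S) = f S" by (rule sup_absorb2[OF le_P_S])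
  have sup_P_T: "sup (f P) (f T) = f T" by (rule sup_absorb2[OF le_P_T])
  have sup_P_One: "sup (f P) (f One) = f One" by (rule sup_absorb2[OF le_P_One])
  have sup_P_G: "sup (f P) (f G) = f S" using sp(5) by (simp add: sup.commute)
  have sup_P_H: "sup (f P) (f H) = f T" using sp(8) by (simp add: sup.commute)
  have sup_Q_Z: "sup (f Q) (f Z) = f Q" by (rule sup_absorb1[OF le_Z_Q])
  have sup_Q_U: "sup (f Q) (f U) = f Q" by (rule sup_absorb1[OF le_U_Q])
  have sup_Q_V: "sup (f Q) (f V) = f Q" by (rule sup_absorb1[OF le_V_Q])
  have sup_Q_P: "sup (f Q) (f P) = f Q" by (rule sup_absorb1[OF le_P_Q])
  have sup_Q_Q: "sup (f Q) (f Q) = f Q" by (rule sup_absorb2[OF le_Q_Q])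
  have sup_Q_S: "sup (f Q) (f S) = f S" by (rule sup_absorb2[OF le_Q_S])
  have sup_Q_T: "sup (f Q) (f T) = f T" by (rule sup_absorb2[OF le_Q_T])
  have sup_Q_One: "sup (f Q) (f One) = f One" by (rule sup_absorb2[OF le_Q_One])
  have sup_Q_G: "sup (f Q) (f G) = f S" using sp(6) by (simp add: sup.commute)
  have sup_Q_H: "sup (f Q) (f H) = f T" using sp(9) by (simp add: sup.commute)
  have sup_S_Z: "sup (f S) (f Z) = f S" by (rule sup_absorb1[OF le_Z_S])
  have sup_S_U: "sup (f S) (f U) = f S" by (rule sup_absorb1[OF le_U_S])
  have sup_S_V: "sup (f S) (f V) = f S" by (rule sup_absorb1[OF le_V_S])
  have sup_S_P: "sup (f S) (f P) = f S" by (rule sup_absorb1[OF le_P_S])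
  have sup_S_Q: "sup (f S) (f Q) = f S" by (rule sup_absorb1[OF le_Q_S])
  have sup_S_S: "sup (f S) (f S) = f S" by (rule sup_absorb2[OF le_S_S])
  have sup_S_T: "sup (f S) (f T) = f One" by (rule sp(11))
  have sup_S_One: "sup (f S) (f One) = f One" by (rule sup_absorb2[OF le_S_One])
  have sup_S_G: "sup (f S) (f G) = f S" by (rule sup_absorb1[OF le_G_S])
  have sup_S_H: "sup (f S) (f H) = f One" using sp(10) by (simp add: sup.commute)
  have sup_T_Z: "sup (f T) (f Z) = f T" by (rule sup_absorb1[OF le_Z_T])
  have sup_T_U: "sup (f T) (f U) = f T" by (rule sup_absorb1[OF le_U_T])
  have sup_T_V: "sup (f T) (f V) = f T" by (rule sup_absorb1[OF le_V_T])
  have sup_T_P: "sup (f T) (f P) = f T" by (rule sup_absorb1[OF le_P_T])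
  have sup_T_Q: "sup (f T) (f Q) = f T" by (rule sup_absorb1[OF le_Q_T])
  have sup_T_S: "sup (f T) (f S) = f One" using sp(11) by (simp add: sup.commute)
  have sup_T_T: "sup (f T) (f T) = f T" by (rule sup_absorb2[OF le_T_T])
  have sup_T_One: "sup (f T) (f One) = f One" by (rule sup_absorb2[OF le_T_One])
  have sup_T_G: "sup (f T) (f G) = f One" using sp(7) by (simp add: sup.commute)
  have sup_T_H: "sup (f T) (f H) = f T" by (rule sup_absorb1[OF le_H_T])
  have sup_One_Z: "sup (f One) (f Z) = f One" by (rule sup_absorb1[OF le_Z_One])
  have sup_One_U: "sup (f One) (f U) = f One" by (rule sup_absorb1[OF le_U_One])
  have sup_One_V: "sup (f One) (f V) = f One" by (rule sup_absorb1[OF le_V_One])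
  have sup_One_P: "sup (f One) (f P) = f One" by (rule sup_absorb1[OF le_P_One])
  have sup_One_Q: "sup (f One) (f Q) = f One" by (rule sup_absorb1[OF le_Q_One])
  have sup_One_S: "sup (f One) (f S) = f One" by (rule sup_absorb1[OF le_S_One])
  have sup_One_T: "sup (f One) (f T) = f One" by (rule sup_absorb1[OF le_T_One])
  have sup_One_One: "sup (f One) (f One) = f One" by (rule sup_absorb2[OF le_One_One])
  have sup_One_G: "sup (f One) (f G) = f One" by (rule sup_absorb1[OF le_G_One])
  have sup_One_H: "sup (f One) (f H) = f One" by (rule sup_absorb1[OF le_H_One])
  have sup_G_Z: "sup (f G) (f Z) = f G" by (rule sup_absorb1[OF le_Z_G])
  have sup_G_U: "sup (f G) (f U) = f G" by (rule sup_absorb1[OF le_U_G])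
  have sup_G_V: "sup (f G) (f V) = f S" using sp(3) by (simp add: sup.commute)
  have sup_G_P: "sup (f G) (f P) = f S" by (rule sp(5))
  have sup_G_Q: "sup (f G) (f Q) = f S" by (rule sp(6))
  have sup_G_S: "sup (f G) (f S) = f S" by (rule sup_absorb2[OF le_G_S])
  have sup_G_T: "sup (f G) (f T) = f One" by (rule sp(7))
  have sup_G_One: "sup (f G) (f One) = f One" by (rule sup_absorb2[OF le_G_One])
  have sup_G_G: "sup (f G) (f G) = f G" by (rule sup_absorb2[OF le_G_G])
  have sup_G_H: "sup (f G) (f H) = f One" by (rule sp(4))
  have sup_H_Z: "sup (f H) (f Z) = f H" by (rule sup_absorb1[OF le_Z_H])
  have sup_H_U: "sup (f H) (f U) = f T" using sp(2) by (simp add: sup.commute)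
  have sup_H_V: "sup (f H) (f V) = f H" by (rule sup_absorb1[OF le_V_H])
  have sup_H_P: "sup (f H) (f P) = f T" by (rule sp(8))
  have sup_H_Q: "sup (f H) (f Q) = f T" by (rule sp(9))
  have sup_H_S: "sup (f H) (f S) = f One" by (rule sp(10))
  have sup_H_T: "sup (f H) (f T) = f T" by (rule sup_absorb2[OF le_H_T])
  have sup_H_One: "sup (f H) (f One) = f One" by (rule sup_absorb2[OF le_H_One])
  have sup_H_G: "sup (f H) (f G) = f One" using sp(4) by (simp add: sup.commute)
  have sup_H_H: "sup (f H) (f H) = f H" by (rule sup_absorb2[OF le_H_H])
  have inf_Z_Z: "inf (f Z) (f Z) = f Z" by (rule inf_absorb1[OF le_Z_Z])
  have inf_Z_U: "inf (f Z) (f U) = f Z" by (rule inf_absorb1[OF le_Z_U])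
  have inf_Z_V: "inf (f Z) (f V) = f Z" by (rule inf_absorb1[OF le_Z_V])
  have inf_Z_P: "inf (f Z) (f P) = f Z" by (rule inf_absorb1[OF le_Z_P])
  have inf_Z_Q: "inf (f Z) (f Q) = f Z" by (rule inf_absorb1[OF le_Z_Q])
  have inf_Z_S: "inf (f Z) (f S) = f Z" by (rule inf_absorb1[OF le_Z_S])
  have inf_Z_T: "inf (f Z) (f T) = f Z" by (rule inf_absorb1[OF le_Z_T])
  have inf_Z_One: "inf (f Z) (f One) = f Z" by (rule inf_absorb1[OF le_Z_One])
  have inf_Z_G: "inf (f Z) (f G) = f Z" by (rule inf_absorb1[OF le_Z_G])
  have inf_Z_H: "inf (f Z) (f H) = f Z" by (rule inf_absorb1[OF le_Z_H])
  have inf_U_Z: "inf (f U) (f Z) = f Z" by (rule inf_absorb2[OF le_Z_U])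
  have inf_U_U: "inf (f U) (f U) = f U" by (rule inf_absorb1[OF le_U_U])
  have inf_U_V: "inf (f U) (f V) = f Z" by (rule inf(1))
  have inf_U_P: "inf (f U) (f P) = f U" by (rule inf_absorb1[OF le_U_P])
  have inf_U_Q: "inf (f U) (f Q) = f U" by (rule inf_absorb1[OF le_U_Q])
  have inf_U_S: "inf (f U) (f S) = f U" by (rule inf_absorb1[OF le_U_S])
  have inf_U_T: "inf (f U) (f T) = f U" by (rule inf_absorb1[OF le_U_T])
  have inf_U_One: "inf (f U) (f One) = f U" by (rule inf_absorb1[OF le_U_One])
  have inf_U_G: "inf (f U) (f G) = f U" by (rule inf_absorb1[OF le_U_G])
  have inf_U_H: "inf (f U) (f H) = f Z" by (rule inf(2))
  have inf_V_Z: "inf (f V) (f Z) = f Z" by (rule inf_absorb2[OF le_Z_V])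
  have inf_V_U: "inf (f V) (f U) = f Z" using inf(1) by (simp add: inf.commute)
  have inf_V_V: "inf (f V) (f V) = f V" by (rule inf_absorb1[OF le_V_V])
  have inf_V_P: "inf (f V) (f P) = f V" by (rule inf_absorb1[OF le_V_P])
  have inf_V_Q: "inf (f V) (f Q) = f V" by (rule inf_absorb1[OF le_V_Q])
  have inf_V_S: "inf (f V) (f S) = f V" by (rule inf_absorb1[OF le_V_S])
  have inf_V_T: "inf (f V) (f T) = f V" by (rule inf_absorb1[OF le_V_T])
  have inf_V_One: "inf (f V) (f One) = f V" by (rule inf_absorb1[OF le_V_One])
  have inf_V_G: "inf (f V) (f G) = f Z" by (rule inf(3))
  have inf_V_H: "inf (f V) (f H) = f V" by (rule inf_absorb1[OF le_V_H])
  have inf_P_Z: "inf (f P) (f Z) = f Z" by (rule inf_absorb2[OF le_Z_P])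
  have inf_P_U: "inf (f P) (f U) = f U" by (rule inf_absorb2[OF le_U_P])
  have inf_P_V: "inf (f P) (f V) = f V" by (rule inf_absorb2[OF le_V_P])
  have inf_P_P: "inf (f P) (f P) = f P" by (rule inf_absorb1[OF le_P_P])
  have inf_P_Q: "inf (f P) (f Q) = f P" by (rule inf_absorb1[OF le_P_Q])
  have inf_P_S: "inf (f P) (f S) = f P" by (rule inf_absorb1[OF le_P_S])
  have inf_P_T: "inf (f P) (f T) = f P" by (rule inf_absorb1[OF le_P_T])
  have inf_P_One: "inf (f P) (f One) = f P" by (rule inf_absorb1[OF le_P_One])
  have inf_P_G: "inf (f P) (f G) = f U" using inf(5) by (simp add: inf.commute)
  have inf_P_H: "inf (f P) (f H) = f V" using inf(8) by (simp add: inf.commute)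
  have inf_Q_Z: "inf (f Q) (f Z) = f Z" by (rule inf_absorb2[OF le_Z_Q])
  have inf_Q_U: "inf (f Q) (f U) = f U" by (rule inf_absorb2[OF le_U_Q])
  have inf_Q_V: "inf (f Q) (f V) = f V" by (rule inf_absorb2[OF le_V_Q])
  have inf_Q_P: "inf (f Q) (f P) = f P" by (rule inf_absorb2[OF le_P_Q])
  have inf_Q_Q: "inf (f Q) (f Q) = f Q" by (rule inf_absorb1[OF le_Q_Q])
  have inf_Q_S: "inf (f Q) (f S) = f Q" by (rule inf_absorb1[OF le_Q_S])
  have inf_Q_T: "inf (f Q) (f T) = f Q" by (rule inf_absorb1[OF le_Q_T])
  have inf_Q_One: "inf (f Q) (f One) = f Q" by (rule inf_absorb1[OF le_Q_One])
  have inf_Q_G: "inf (f Q) (f G) = f U" using inf(6) by (simp add: inf.commute)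
  have inf_Q_H: "inf (f Q) (f H) = f V" using inf(9) by (simp add: inf.commute)
  have inf_S_Z: "inf (f S) (f Z) = f Z" by (rule inf_absorb2[OF le_Z_S])
  have inf_S_U: "inf (f S) (f U) = f U" by (rule inf_absorb2[OF le_U_S])
  have inf_S_V: "inf (f S) (f V) = f V" by (rule inf_absorb2[OF le_V_S])
  have inf_S_P: "inf (f S) (f P) = f P" by (rule inf_absorb2[OF le_P_S])
  have inf_S_Q: "inf (f S) (f Q) = f Q" by (rule inf_absorb2[OF le_Q_S])
  have inf_S_S: "inf (f S) (f S) = f S" by (rule inf_absorb1[OF le_S_S])
  have inf_S_T: "inf (f S) (f T) = f Q" by (rule inf(11))
  have inf_S_One: "inf (f S) (f One) = f S" by (rule inf_absorb1[OF le_S_One])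
  have inf_S_G: "inf (f S) (f G) = f G" by (rule inf_absorb2[OF le_G_S])
  have inf_S_H: "inf (f S) (f H) = f V" using inf(10) by (simp add: inf.commute)
  have inf_T_Z: "inf (f T) (f Z) = f Z" by (rule inf_absorb2[OF le_Z_T])
  have inf_T_U: "inf (f T) (f U) = f U" by (rule inf_absorb2[OF le_U_T])
  have inf_T_V: "inf (f T) (f V) = f V" by (rule inf_absorb2[OF le_V_T])
  have inf_T_P: "inf (f T) (f P) = f P" by (rule inf_absorb2[OF le_P_T])
  have inf_T_Q: "inf (f T) (f Q) = f Q" by (rule inf_absorb2[OF le_Q_T])
  have inf_T_S: "inf (f T) (f S) = f Q" using inf(11) by (simp add: inf.commute)
  have inf_T_T: "inf (f T) (f T) = f T" by (rule inf_absorb1[OF le_T_T])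
  have inf_T_One: "inf (f T) (f One) = f T" by (rule inf_absorb1[OF le_T_One])
  have inf_T_G: "inf (f T) (f G) = f U" using inf(7) by (simp add: inf.commute)
  have inf_T_H: "inf (f T) (f H) = f H" by (rule inf_absorb2[OF le_H_T])
  have inf_One_Z: "inf (f One) (f Z) = f Z" by (rule inf_absorb2[OF le_Z_One])
  have inf_One_U: "inf (f One) (f U) = f U" by (rule inf_absorb2[OF le_U_One])
  have inf_One_V: "inf (f One) (f V) = f V" by (rule inf_absorb2[OF le_V_One])
  have inf_One_P: "inf (f One) (f P) = f P" by (rule inf_absorb2[OF le_P_One])
  have inf_One_Q: "inf (f One) (f Q) = f Q" by (rule inf_absorb2[OF le_Q_One])
  have inf_One_S: "inf (f One) (f S) = f S" by (rule inf_absorb2[OF le_S_One])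
  have inf_One_T: "inf (f One) (f T) = f T" by (rule inf_absorb2[OF le_T_One])
  have inf_One_One: "inf (f One) (f One) = f One" by (rule inf_absorb1[OF le_One_One])
  have inf_One_G: "inf (f One) (f G) = f G" by (rule inf_absorb2[OF le_G_One])
  have inf_One_H: "inf (f One) (f H) = f H" by (rule inf_absorb2[OF le_H_One])
  have inf_G_Z: "inf (f G) (f Z) = f Z" by (rule inf_absorb2[OF le_Z_G])
  have inf_G_U: "inf (f G) (f U) = f U" by (rule inf_absorb2[OF le_U_G])
  have inf_G_V: "inf (f G) (f V) = f Z" using inf(3) by (simp add: inf.commute)
  have inf_G_P: "inf (f G) (f P) = f U" by (rule inf(5))
  have inf_G_Q: "inf (f G) (f Q) = f U" by (rule inf(6))
  have inf_G_S: "inf (f G) (f S) = f G" by (rule inf_absorb1[OF le_G_S])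
  have inf_G_T: "inf (f G) (f T) = f U" by (rule inf(7))
  have inf_G_One: "inf (f G) (f One) = f G" by (rule inf_absorb1[OF le_G_One])
  have inf_G_G: "inf (f G) (f G) = f G" by (rule inf_absorb1[OF le_G_G])
  have inf_G_H: "inf (f G) (f H) = f Z" by (rule inf(4))
  have inf_H_Z: "inf (f H) (f Z) = f Z" by (rule inf_absorb2[OF le_Z_H])
  have inf_H_U: "inf (f H) (f U) = f Z" using inf(2) by (simp add: inf.commute)
  have inf_H_V: "inf (f H) (f V) = f V" by (rule inf_absorb2[OF le_V_H])
  have inf_H_P: "inf (f H) (f P) = f V" by (rule inf(8))
  have inf_H_Q: "inf (f H) (f Q) = f V" by (rule inf(9))
  have inf_H_S: "inf (f H) (f S) = f V" by (rule inf(10))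
  have inf_H_T: "inf (f H) (f T) = f H" by (rule inf_absorb1[OF le_H_T])
  have inf_H_One: "inf (f H) (f One) = f H" by (rule inf_absorb1[OF le_H_One])
  have inf_H_G: "inf (f H) (f G) = f Z" using inf(4) by (simp add: inf.commute)
  have inf_H_H: "inf (f H) (f H) = f H" by (rule inf_absorb1[OF le_H_H])
  have O: "\<forall>x y. f x \<le> f y \<longleftrightarrow> le15 x y"
    unfolding le15_eq le15t_def by (intro allI; case_tac x; case_tac y; simp add: le_Z_Z le_Z_U le_Z_V le_Z_P le_Z_Q le_Z_S le_Z_T le_Z_One le_Z_G le_Z_H nle_U_Z le_U_U nle_U_V le_U_P le_U_Q le_U_S le_U_T le_U_One le_U_G nle_U_H nle_V_Z nle_V_U le_V_V le_V_P le_V_Q le_V_S le_V_T le_V_One nle_V_G le_V_H nle_P_Z nle_P_U nle_P_V le_P_P le_P_Q le_P_S le_P_T le_P_One nle_P_G nle_P_H nle_Q_Z nle_Q_U nle_Q_V nle_Q_P le_Q_Q le_Q_S le_Q_T le_Q_One nle_Q_G nle_Q_H nle_S_Z nle_S_U nle_S_V nle_S_P nle_S_Q le_S_S nle_S_T le_S_One nle_S_G nle_S_H nle_T_Z nle_T_U nle_T_V nle_T_P nle_T_Q nle_T_S le_T_T le_T_One nle_T_G nle_T_H nle_One_Z nle_One_U nle_One_V nle_One_P nle_One_Q nle_One_S nle_One_T le_One_One nle_One_G nle_One_H nle_G_Z nle_G_U nle_G_V nle_G_P nle_G_Q le_G_S nle_G_T le_G_One le_G_G nle_G_H nle_H_Z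 nle_H_U nle_H_V nle_H_P nle_H_Q nle_H_S le_H_T le_H_One nle_H_G le_H_H)
  have C: "\<forall>x y. sup (f x) (f y) \<in> range f \<and> inf (f x) (f y) \<in> range f"
    by (intro allI; case_tac x; case_tac y; simp add: sup_Z_Z sup_Z_U sup_Z_V sup_Z_P sup_Z_Q sup_Z_S sup_Z_T sup_Z_One sup_Z_G sup_Z_H sup_U_Z sup_U_U sup_U_V sup_U_P sup_U_Q sup_U_S sup_U_T sup_U_One sup_U_G sup_U_H sup_V_Z sup_V_U sup_V_V sup_V_P sup_V_Q sup_V_S sup_V_T sup_V_One sup_V_G sup_V_H sup_P_Z sup_P_U sup_P_V sup_P_P sup_P_Q sup_P_S sup_P_T sup_P_One sup_P_G sup_P_H sup_Q_Z sup_Q_U sup_Q_V sup_Q_P sup_Q_Q sup_Q_S sup_Q_T sup_Q_One sup_Q_G sup_Q_H sup_S_Z sup_S_U sup_S_V sup_S_P sup_S_Q sup_S_S sup_S_T sup_S_One sup_S_G sup_S_H sup_T_Z sup_T_U sup_T_V sup_T_P sup_T_Q sup_T_S sup_T_T sup_T_One sup_T_G sup_T_H sup_One_Z sup_One_U sup_One_V sup_One_P sup_One_Q sup_One_S sup_One_T sup_One_One sup_One_G sup_One_H sup_G_Z sup_G_U sup_G_V sup_G_P sup_G_Q sup_G_S sup_G_T sup_G_One sup_G_G sup_G_H sup_H_Z sup_H_U sup_H_V sup_H_P sup_H_Q sup_H_S sup_H_T sup_H_One sup_H_G sup_H_H inf_Z_Z inf_Z_U inf_Z_V inf_Z_P inf_Z_Q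 inf_Z_S inf_Z_T inf_Z_One inf_Z_G inf_Z_H inf_U_Z inf_U_U inf_U_V inf_U_P inf_U_Q inf_U_S inf_U_T inf_U_One inf_U_G inf_U_H inf_V_Z inf_V_U inf_V_V inf_V_P inf_V_Q inf_V_S inf_V_T inf_V_One inf_V_G inf_V_H inf_P_Z inf_P_U inf_P_V inf_P_P inf_P_Q inf_P_S inf_P_T inf_P_One inf_P_G inf_P_H inf_Q_Z inf_Q_U inf_Q_V inf_Q_P inf_Q_Q inf_Q_S inf_Q_T inf_Q_One inf_Q_G inf_Q_H inf_S_Z inf_S_U inf_S_V inf_S_P inf_S_Q inf_S_S inf_S_T inf_S_One inf_S_G inf_S_H inf_T_Z inf_T_U inf_T_V inf_T_P inf_T_Q inf_T_S inf_T_T inf_T_One inf_T_G inf_T_H inf_One_Z inf_One_U inf_One_V inf_One_P inf_One_Q inf_One_S inf_One_T inf_One_One inf_One_G inf_One_H inf_G_Z inf_G_U inf_G_V inf_G_P inf_G_Q inf_G_S inf_G_T inf_G_One inf_G_G inf_G_H inf_H_Z inf_H_U inf_H_V inf_H_P inf_H_Q inf_H_S inf_H_T inf_H_One inf_H_G inf_H_H)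
  show ?thesis unfolding has_sublattice_L15_def using O C by blast
qed
theorem lemma3p1:
  fixes a1 a2 a3 b1 b2 b3 :: "'a::lattice"
  assumes no_dr: "\<forall>x::'a. \<not> doubly_reducible x"
    and distinct: "distinct [a1, a2, a3, b1, b2, b3]"
    and "a1 < a2" and "a2 < a3" and "b1 < b2" and "b2 < b3"
    and "a1 < b3" and "b1 < a3"
    and "a2 \<parallel> b1" and "a2 \<parallel> b2" and "a2 \<parallel> b3"
    and "a1 \<parallel> b2" and "a3 \<parallel> b2"
    and "sup a2 b2 = sup a3 b3"
    and "inf a2 b2 = inf a1 b1"
  shows "has_sublattice_L15 TYPE('a)"
proof -
  note A = assms(3-8)
  note I = assms(9-13)[unfolded incomparable_def]
  define z where "z = inf a2 b2"
  define w where "w = sup a2 b2"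
  define u where "u = inf a2 b3"
  define v where "v = inf b2 a3"
  define t where "t = sup u b2"
  define s where "s = sup v a2"
  define p where "p = sup u v"
  define q where "q = inf s t"
  have a1u: "a1 \<le> u" unfolding u_def using A by (simp add: less_imp_le)
  have b1v: "b1 \<le> v" unfolding v_def using A by (simp add: less_imp_le)
  have ua2: "u \<le> a2" and ub3: "u \<le> b3" unfolding u_def by simp_all
  have vb2: "v \<le> b2" and va3: "v \<le> a3" unfolding v_def by simp_all
  have tb3: "t \<le> b3" unfolding t_def using ub3 A by simp
  have sa3: "s \<le> a3" unfolding s_def using va3 A by simp
  have b2t: "b2 \<le> t" and ut: "u \<le> t" unfolding t_def by simp_all
  have a2s: "a2 \<le> s" and vs: "v \<le> s" unfolding s_def by simp_all
  have zu: "z \<le> u" unfolding z_def u_def using A by (meson inf_mono order.refl less_imp_le)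
  have zv: "z \<le> v" unfolding z_def v_def using A by (metis inf_commute inf_mono order.refl less_imp_le)
  have up: "u \<le> p" and vp: "v \<le> p" unfolding p_def by simp_all
  have us: "u \<le> s" using ua2 a2s by (rule order_trans)
  have vt: "v \<le> t" using vb2 b2t by (rule order_trans)
  have ps: "p \<le> s" unfolding p_def using us vs by simp
  have pt: "p \<le> t" unfolding p_def using ut vt by simp
  have pq: "p \<le> q" unfolding q_def using ps pt by simp
  have qs: "q \<le> s" and qt: "q \<le> t" unfolding q_def by simp_all
  have sw: "s \<le> w" unfolding s_def w_def using vb2 by (simp add: le_supI2)
  have tw: "t \<le> w" unfolding t_def w_def using ua2 by (simp add: le_supI2 le_supI1)
  have uv: "u \<parallel> v" unfolding incomparable_def using a1u b1v ua2 vb2 I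
    by (meson order_trans)
  have st: "s \<parallel> t" unfolding incomparable_def using a2s b2t tb3 sa3 I
    by (meson order_trans)
  have pnq: "p \<noteq> q"
  proof
    assume "p = q"
    then have "doubly_reducible p" unfolding doubly_reducible_def using uv st p_def q_def by blast
    with no_dr show False by blast
  qed
  have n1: "\<not> u \<le> b2" using a1u I by (meson order_trans)
  have n2: "\<not> v \<le> a2" using b1v I by (meson order_trans)
  have n3: "\<not> a2 \<le> b2" using I by blast
  have n4: "\<not> a2 \<le> t" using tb3 I by (meson order_trans)
  have n5: "\<not> a2 \<le> p" using n4 pt by (meson order_trans)
  have n6: "\<not> b2 \<le> a2" using I by blast
  have n7: "\<not> b2 \<le> s" using sa3 I by (meson order_trans)
  have n8: "\<not> b2 \<le> p" using n7 ps by (meson order_trans)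
  have n9: "\<not> q \<le> a2" using b1v vp pq I by (meson order_trans)
  have n10: "\<not> q \<le> b2" using a1u up pq I by (meson order_trans)
  have n11: "\<not> q \<le> p" using pq pnq by (meson antisym)
  have za2: "z \<le> a2" and zb2: "z \<le> b2" and a2w: "a2 \<le> w" and b2w: "b2 \<le> w"
    unfolding z_def w_def by simp_all
  have ia2t: "inf a2 t = u" by (rule antisym[OF order_trans[OF inf_mono[OF order_refl tb3] eq_refl[OF u_def[symmetric]]] le_infI[OF ua2 ut]])
  have ib2s: "inf b2 s = v" by (rule antisym[OF order_trans[OF inf_mono[OF order_refl sa3] eq_refl[OF v_def[symmetric]]] le_infI[OF vb2 vs]])
  have e1: "inf u v = z" by (rule antisym[OF order_trans[OF inf_mono[OF ua2 vb2] eq_refl[OF z_def[symmetric]]] le_infI[OF zu zv]])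
  have e2: "inf u b2 = z" by (rule antisym[OF order_trans[OF inf_mono[OF ua2 order_refl] eq_refl[OF z_def[symmetric]]] le_infI[OF zu zb2]])
  have e3: "inf v a2 = z" by (rule antisym[OF order_trans[OF le_infI[OF inf_le2 le_infI1[OF vb2]] eq_refl[OF z_def[symmetric]]] le_infI[OF zv za2]])
  have e4: "sup a2 p = s" unfolding p_def s_def using ua2 by (metis sup_assoc sup_absorb1 sup_commute)
  have e5: "inf a2 p = u" by (rule antisym[OF order_trans[OF inf_mono[OF order_refl pt] eq_refl[OF ia2t]] le_infI[OF ua2 up]])
  have e6: "sup a2 q = s" by (rule antisym[OF le_supI[OF a2s qs] order_trans[OF eq_refl[OF s_def] le_supI[OF le_supI2[OF order_trans[OF vp pq]] sup_ge1]]])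
  have e7: "inf a2 q = u" by (rule antisym[OF order_trans[OF inf_mono[OF order_refl qt] eq_refl[OF ia2t]] le_infI[OF ua2 order_trans[OF up pq]]])
  have e8: "sup a2 t = w" by (rule antisym[OF le_supI[OF a2w tw] order_trans[OF eq_refl[OF w_def] sup_mono[OF order_refl b2t]]])
  have e9: "sup b2 p = t" unfolding p_def t_def using vb2 by (metis sup_assoc sup_absorb1 sup_commute)
  have e10: "inf b2 p = v" by (rule antisym[OF order_trans[OF inf_mono[OF order_refl ps] eq_refl[OF ib2s]] le_infI[OF vb2 vp]])
  have e11: "sup b2 q = t" by (rule antisym[OF le_supI[OF b2t qt] order_trans[OF eq_refl[OF t_def] le_supI[OF le_supI2[OF order_trans[OF up pq]] sup_ge1]]])
  have e12: "inf b2 q = v" by (rule antisym[OF order_trans[OF inf_mono[OF order_refl qs] eq_refl[OF ib2s]] le_infI[OF vb2 order_trans[OF vp pq]]])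
  have e13: "sup b2 s = w" by (rule antisym[OF le_supI[OF b2w sw] order_trans[OF eq_refl[OF w_def] le_supI[OF le_supI2[OF a2s] sup_ge1]]])
  have e14: "sup s t = w" by (rule antisym[OF le_supI[OF sw tw] order_trans[OF eq_refl[OF w_def] sup_mono[OF a2s b2t]]])
  have h1: "sup b2 u = t" by (simp add: t_def sup_commute)
  have h2: "sup a2 v = s" by (simp add: s_def sup_commute)
  have h3: "inf b2 u = z" using e2 by (simp add: inf_commute)
  have h4: "inf a2 v = z" using e3 by (simp add: inf_commute)
  define f where "f = (\<lambda>x. case x of Z \<Rightarrow> z | U \<Rightarrow> u | V \<Rightarrow> v | P \<Rightarrow> p | Q \<Rightarrow> q
     | S \<Rightarrow> s | T \<Rightarrow> t | One \<Rightarrow> w | G \<Rightarrow> a2 | H \<Rightarrow> b2)"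
  show ?thesis
    by (rule L15_crit[of f]) (simp_all add: f_def zu zv up vp pq qs qt sw tw ua2 a2s vb2 b2t
        n1 n2 n3 n4 n5 n6 n7 n8 n9 n10 n11 e1 e2 e3 e4 e5 e6 e7 e8 e9 e10 e11 e12 e13 e14
        ia2t ib2s p_def[symmetric] t_def[symmetric] s_def[symmetric] w_def[symmetric]
        z_def[symmetric] q_def[symmetric] h1 h2 h3 h4)
qed
end
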